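(* Let $g\ge1$ and let $Q$ be the $g\times g$ matrix with $Q_{ii}=2$, $Q_{ij}=1$ ($i\neq j$). For two vertices $\mathbf a,\mathbf a'$ of the Voronoi polytope $V_Q$, we have $\mathbf a\sim\mathbf a'$ if and only if there exists $k\in\{1,\dots,g\}$ with $\mathbf a,\mathbf a'\in[\mathbf k]$.
   Context: $V_Q=\{\mathbf a\in\mathbb R^g:\ \mathbf a^TQ\mathbf a\le(\mathbf a-\mathbf c)^TQ(\mathbf a-\mathbf c)\ \forall\mathbf c\in\mathbb Z^g\}$ (Voronoi polytope of the genus-$g$ banana graph). For a vertex $\mathbf a$, $\mathcal D_{\mathbf a,Q}=\{\mathbf c\in\mathbb Z^g:\ \mathbf a^TQ\mathbf a=(\mathbf a-\mathbf c)^TQ(\mathbf a-\mathbf c)\}$. Vertices satisfy $\mathbf a\sim\mathbf a'$ iff $\mathbf a'=\mathbf a-\mathbf c_0$ for some $\mathbf c_0\in\mathcal D_{\mathbf a,Q}$. For $k=1,\dots,g$, $[\mathbf k]$ is the set of vectors in $\mathbb R^g$ with all entries in $\{-\tfrac{k}{g+1},\tfrac{g+1-k}{g+1}\}$ and with either $k$ or $k-1$ entries equal to $\tfrac{g+1-k}{g+1}$; the vertex set of $V_Q$ is $\bigcup_{k=1}^g[\mathbf k]$. *)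

theory Defs
  imports "HOL-Analysis.Analysis"
begin

text \<open>Genus g = CARD('n). The matrix Q with 2 on the diagonal and 1 off the diagonal.\<close>
definition bananaQ :: "real^'n^'n" where
  "bananaQ = (\<chi> i j. if i = j then 2 else 1)"

definition qform :: "real^'n \<Rightarrow> real" where
  "qform a = a \<bullet> (bananaQ *v a)"

definition int_vec :: "real^'n \<Rightarrow> bool" where
  "int_vec c \<longleftrightarrow> (\<forall>i. c $ i \<in> \<int>)"

definition voronoi :: "(real^'n) set" where
  "voronoi = {a. \<forall>c. int_vec c \<longrightarrow> qform a \<le> qform (a - c)}"

definition Dset :: "real^'n \<Rightarrow> (real^'n) set" where
  "Dset a = {c. int_vec c \<and> qform a = qform (a - c)}"

definition vsim :: "real^'n \<Rightarrow> real^'n \<Rightarrow> bool" where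
  "vsim a a' \<longleftrightarrow> (\<exists>c0\<in>Dset a. a' = a - c0)"

definition bracket :: "nat \<Rightarrow> (real^'n) set" where
  "bracket k = {a.
     (\<forall>i. a $ i = - real k / (real CARD('n) + 1)
        \<or> a $ i = (real CARD('n) + 1 - real k) / (real CARD('n) + 1))
     \<and> (card {i. a $ i = (real CARD('n) + 1 - real k) / (real CARD('n) + 1)} = k
        \<or> card {i. a $ i = (real CARD('n) + 1 - real k) / (real CARD('n) + 1)} = k - 1)}"

end

theory Submission
  imports Defs
begin


lemma sum_option:
  fixes f :: "('n::finite) option \<Rightarrow> real"
  shows "(\<Sum>p\<in>UNIV. f p) = f None + (\<Sum>i\<in>UNIV. f (Some i))"
proof -
  have U: "(UNIV :: 'n option set) = insert None (range Some)"
    by (auto intro: option.exhaust)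
  have "(\<Sum>p\<in>UNIV. f p) = f None + sum f (range Some)"
    unfolding U by (subst sum.insert) auto
  also have "sum f (range Some) = (\<Sum>i\<in>UNIV. f (Some i))"
    by (subst sum.reindex) auto
  finally show ?thesis .
qed

lemma qform_expand:
  fixes a :: "real^'n"
  shows "qform a = (\<Sum>i\<in>UNIV. (a$i)^2) + (\<Sum>i\<in>UNIV. a$i)^2"
proof -
  have mv: "(bananaQ *v a) $ i = a$i + (\<Sum>j\<in>UNIV. a$j)" for i
  proof -
    have "(bananaQ *v a) $ i = (\<Sum>j\<in>UNIV. (if i = j then 2 else 1) * a$j)"
      by (simp add: matrix_vector_mult_def bananaQ_def)
    also have "\<dots> = (\<Sum>j\<in>UNIV. (if i = j then a$j else 0) + a$j)"
      by (rule sum.cong) auto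
    also have "\<dots> = a$i + (\<Sum>j\<in>UNIV. a$j)"
      by (simp add: sum.distrib)
    finally show ?thesis .
  qed
  have "qform a = (\<Sum>i\<in>UNIV. a$i * (a$i + (\<Sum>j\<in>UNIV. a$j)))"
    by (simp add: qform_def inner_vec_def mv)
  also have "\<dots> = (\<Sum>i\<in>UNIV. (a$i)^2) + (\<Sum>i\<in>UNIV. a$i) * (\<Sum>j\<in>UNIV. a$j)"
    by (simp add: algebra_simps power2_eq_square sum.distrib sum_distrib_right)
  finally show ?thesis by (simp add: power2_eq_square)
qed

lemma qform_diff:
  fixes a c :: "real^'n"
  shows "qform (a - c) = qform a - 2 * (\<Sum>k\<in>UNIV. c$k * (a$k + (\<Sum>i\<in>UNIV. a$i))) + qform c"
proof -
  have "(\<Sum>k\<in>UNIV. c$k * (a$k + (\<Sum>i\<in>UNIV. a$i))) =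
        (\<Sum>k\<in>UNIV. c$k * a$k) + (\<Sum>k\<in>UNIV. c$k) * (\<Sum>i\<in>UNIV. a$i)"
    by (simp add: distrib_left sum.distrib flip: sum_distrib_right)
  moreover have "(\<Sum>i\<in>UNIV. ((a - c)$i)^2) = (\<Sum>i\<in>UNIV. (a$i)^2) - 2 * (\<Sum>k\<in>UNIV. c$k * a$k) + (\<Sum>i\<in>UNIV. (c$i)^2)"
    by (simp add: power2_diff sum.distrib sum_subtractf sum_distrib_left algebra_simps)
  moreover have "(\<Sum>i\<in>UNIV. (a - c)$i) = (\<Sum>i\<in>UNIV. a$i) - (\<Sum>i\<in>UNIV. c$i)"
    by (simp add: sum_subtractf)
  ultimately show ?thesis
    unfolding qform_expand[of "a - c"] qform_expand[of a] qform_expand[of c]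
    by (simp only:) (simp add: power2_diff algebra_simps)
qed

lemma sum_delta_mult:
  fixes f :: "'n::finite \<Rightarrow> real"
  shows "(\<Sum>k\<in>UNIV. (if k = i then x else 0) * f k) = x * f i"
proof -
  have "(\<Sum>k\<in>UNIV. (if k = i then x else 0) * f k) = (\<Sum>k\<in>UNIV. if k = i then x * f k else 0)"
    by (rule sum.cong) auto
  then show ?thesis by simp
qed

definition ext :: "real^'n \<Rightarrow> 'n option \<Rightarrow> real" where
  "ext a p = (case p of None \<Rightarrow> - (\<Sum>i\<in>UNIV. a$i) | Some i \<Rightarrow> a$i)"

lemma ext_simps [simp]: "ext a None = - (\<Sum>i\<in>UNIV. a$i)" "ext a (Some i) = a$i"
  by (simp_all add: ext_def)

lemma sum_ext: "(\<Sum>p\<in>UNIV. ext a p) = 0"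
  by (simp add: sum_option)

lemma V_imp_P:
  fixes a :: "real^'n"
  assumes "a \<in> voronoi"
  shows "ext a p - ext a q \<le> 1"
proof -
  let ?S = "\<Sum>i\<in>UNIV. a$i"
  have key: "2 * (\<Sum>k\<in>UNIV. c$k * (a$k + ?S)) \<le> qform c" if "int_vec c" for c
    using assms that qform_diff[of a c] unfolding voronoi_def by force
  show ?thesis
  proof (cases p)
    case None
    show ?thesis
    proof (cases q)
      case None then show ?thesis using \<open>p = None\<close> by simp
    next
      case (Some i)
      define c :: "real^'n" where "c = (\<chi> k. if k = i then -1 else 0)"
      have ic: "int_vec c" by (simp add: int_vec_def c_def)
      have "(\<Sum>k\<in>UNIV. c$k * (a$k + ?S)) = - (a$i + ?S)"
        by (simp add: c_def sum_delta_mult)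
      moreover have "qform c = 2"
      proof -
        have sq: "(c$k)^2 = (if k = i then 1 else 0)" for k by (simp add: c_def)
        show ?thesis unfolding qform_expand sq by (simp add: c_def)
      qed
      ultimately show ?thesis using key[OF ic] None Some by simp
    qed
  next
    case (Some i)
    show ?thesis
    proof (cases q)
      case None
      define c :: "real^'n" where "c = (\<chi> k. if k = i then 1 else 0)"
      have ic: "int_vec c" by (simp add: int_vec_def c_def)
      have "(\<Sum>k\<in>UNIV. c$k * (a$k + ?S)) = (a$i + ?S)"
        by (simp add: c_def sum_delta_mult)
      moreover have "qform c = 2"
      proof -
        have sq: "(c$k)^2 = (if k = i then 1 else 0)" for k by (simp add: c_def)
        show ?thesis unfolding qform_expand sq by (simp add: c_def)
      qed
      ultimately show ?thesis using key[OF ic] None Some by simp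
    next
      case (Some j)
      show ?thesis
      proof (cases "i = j")
        case True then show ?thesis using \<open>p = Some i\<close> Some by simp
      next
        case False
        define c :: "real^'n" where "c = (\<chi> k. (if k = i then 1 else 0) - (if k = j then 1 else 0))"
        have ic: "int_vec c" by (simp add: int_vec_def c_def)
        have "(\<Sum>k\<in>UNIV. c$k * (a$k + ?S)) = (a$i + ?S) - (a$j + ?S)"
          by (simp add: c_def left_diff_distrib sum_subtractf sum_delta_mult)
        moreover have sq: "(c$k)^2 = (if k = i then 1 else 0) + (if k = j then 1 else 0)" for k
          using False by (simp add: c_def)
        have "qform c = 2" unfolding qform_expand sq
          using False by (simp add: c_def sum.distrib sum_subtractf)
        ultimately show ?thesis using key[OF ic] \<open>p = Some i\<close> Some by simp
      qed
    qed
  qed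
qed



lemma int_abs_le_sq: "(x::real) \<in> \<int> \<Longrightarrow> \<bar>x\<bar> \<le> x^2"
proof -
  assume "x \<in> \<int>"
  then obtain n where n: "x = of_int n" by (auto elim: Ints_cases)
  have "\<bar>n\<bar> \<le> n^2"
  proof -
    have "\<bar>n\<bar> * 1 \<le> \<bar>n\<bar> * \<bar>n\<bar>" if "n \<noteq> 0" using that by (intro mult_left_mono) auto
    then show ?thesis by (cases "n = 0") (auto simp: power2_eq_square)
  qed
  then have "real_of_int \<bar>n\<bar> \<le> real_of_int (n^2)" by linarith
  then show ?thesis using n by simp
qed

lemma term_bound: "(x::real) \<in> \<int> \<Longrightarrow> 0 \<le> t \<Longrightarrow> t \<le> 1 \<Longrightarrow> x * t \<le> (x^2 + x) / 2"
proof -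
  assume x: "x \<in> \<int>" and t: "0 \<le> t" "t \<le> 1"
  have "\<bar>x\<bar> \<le> x^2" using int_abs_le_sq[OF x] .
  show ?thesis
  proof (cases "x \<ge> 0")
    case True
    then have "x * t \<le> x" using t by (simp add: mult_left_le)
    then show ?thesis using \<open>\<bar>x\<bar> \<le> x^2\<close> True by simp
  next
    case False
    then have "x * t \<le> 0" using t by (simp add: mult_nonpos_nonneg)
    then show ?thesis using \<open>\<bar>x\<bar> \<le> x^2\<close> False by simp
  qed
qed

lemma C_bound: "(x::real) \<in> \<int> \<Longrightarrow> -1 \<le> m \<Longrightarrow> m \<le> 0 \<Longrightarrow> x * m \<le> (x^2 - x) / 2"
proof -
  assume x: "x \<in> \<int>" and m: "-1 \<le> m" "m \<le> 0"
  have "\<bar>x\<bar> \<le> x^2" using int_abs_le_sq[OF x] .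
  show ?thesis
  proof (cases "x \<ge> 0")
    case True
    then have "x * m \<le> 0" using m by (simp add: mult_nonneg_nonpos)
    then show ?thesis using \<open>\<bar>x\<bar> \<le> x^2\<close> True by simp
  next
    case False
    have "(-x) * (-m) \<le> (-x) * 1" using m False by (intro mult_left_mono) auto
    then have "x * m \<le> - x" by simp
    then show ?thesis using \<open>\<bar>x\<bar> \<le> x^2\<close> False by simp
  qed
qed

lemma P_imp_V:
  fixes a :: "real^'n"
  assumes P: "\<And>p q. ext a p - ext a q \<le> 1"
  shows "a \<in> voronoi"
  unfolding voronoi_def
proof (intro CollectI allI impI)
  fix c :: "real^'n" assume ic: "int_vec c"
  let ?S = "\<Sum>i\<in>UNIV. a$i"
  let ?C = "\<Sum>i\<in>UNIV. c$i"
  define mn where "mn = Min (range (ext a))"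
  have "mn \<in> range (ext a)" unfolding mn_def by (rule Min_in) auto
  then obtain p0 where p0: "ext a p0 = mn" by auto
  have mnle: "mn \<le> ext a p" for p unfolding mn_def by (rule Min_le) auto
  define m where "m = mn - ext a None"
  have m1: "-1 \<le> m" using P[of None p0] p0 by (simp add: m_def)
  have m2: "m \<le> 0" using mnle[of None] by (simp add: m_def)
  have u: "0 \<le> (a$k + ?S) - m \<and> (a$k + ?S) - m \<le> 1" for k
    using mnle[of "Some k"] P[of "Some k" p0] p0 by (simp add: m_def)
  have Cint: "?C \<in> \<int>" using ic by (auto simp: int_vec_def intro!: Ints_sum)
  have "(\<Sum>k\<in>UNIV. c$k * (a$k + ?S)) = (\<Sum>k\<in>UNIV. c$k * ((a$k + ?S) - m)) + ?C * m"
  proof -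
    have "(\<Sum>k\<in>UNIV. c$k * (a$k + ?S)) = (\<Sum>k\<in>UNIV. c$k * ((a$k + ?S) - m) + c$k * m)"
      by (rule sum.cong) (auto simp: algebra_simps)
    also have "\<dots> = (\<Sum>k\<in>UNIV. c$k * ((a$k + ?S) - m)) + ?C * m"
      by (simp only: sum.distrib sum_distrib_right)
    finally show ?thesis .
  qed
  also have "\<dots> \<le> (\<Sum>k\<in>UNIV. ((c$k)^2 + c$k) / 2) + (?C^2 - ?C) / 2"
    apply (rule add_mono)
     apply (rule sum_mono)
    subgoal for k using term_bound[of "c$k" "(a$k + ?S) - m"] ic u[of k] by (simp add: int_vec_def)
    using C_bound[OF Cint m1 m2] by simp
  also have "\<dots> = qform c / 2"
    by (simp add: qform_expand sum_divide_distrib[symmetric] sum.distrib add_divide_distrib[symmetric] diff_divide_distrib[symmetric])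
  finally show "qform a \<le> qform (a - c)" using qform_diff[of a c] by simp
qed



lemma ext_perturb:
  fixes a :: "real^'n" and D :: "'n option \<Rightarrow> real"
  assumes "sum D UNIV = 0"
  shows "ext (a + e *\<^sub>R (\<chi> i. D (Some i))) p = ext a p + e * D p"
proof (cases p)
  case None
  have "D None = - (\<Sum>i\<in>UNIV. D (Some i))" using assms sum_option[of D] by simp
  then show ?thesis using None by (simp add: sum.distrib sum_distrib_left[symmetric])
next
  case (Some i) then show ?thesis by simp
qed

lemma perturb:
  fixes a :: "real^'n" and D :: "'n option \<Rightarrow> real"
  assumes aV: "a \<in> voronoi" and sD: "sum D UNIV = 0" and D0: "D p1 \<noteq> 0"
    and tight: "\<And>p q. ext a p - ext a q = 1 \<Longrightarrow> D p = D q"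
  shows "\<not> a extreme_point_of voronoi"
proof
  assume ext: "a extreme_point_of voronoi"
  define d :: "real^'n" where "d = (\<chi> i. D (Some i))"
  let ?v = "ext a"
  define sl where "sl = (\<lambda>(p,q). if ?v p - ?v q = 1 then 1 else 1 - (?v p - ?v q))"
  define \<delta> where "\<delta> = Min (range sl)"
  have slpos: "sl pq > 0" for pq
    using V_imp_P[OF aV, of "fst pq" "snd pq"] by (cases pq) (auto simp: sl_def)
  have "\<delta> \<in> range sl" unfolding \<delta>_def by (rule Min_in) auto
  then have dpos: "\<delta> > 0" using slpos by auto
  have dle: "\<delta> \<le> sl pq" for pq unfolding \<delta>_def by (rule Min_le) auto
  define B where "B = (\<Sum>p\<in>UNIV. \<bar>D p\<bar>) + 1"
  have Dle: "\<bar>D p\<bar> \<le> B - 1" for p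
    unfolding B_def by (simp add: member_le_sum[of p UNIV "\<lambda>p. \<bar>D p\<bar>"])
  have Bpos: "B \<ge> 1" unfolding B_def by (simp add: sum_nonneg)
  define e where "e = \<delta> / (2 * B)"
  have epos: "e > 0" using dpos Bpos by (simp add: e_def)
  have eb: "e * (2 * B) = \<delta>" using Bpos by (simp add: e_def)
  have inV: "a + t *\<^sub>R d \<in> voronoi" if "\<bar>t\<bar> = e" for t
  proof (rule P_imp_V)
    fix p q
    have eq: "ext (a + t *\<^sub>R d) p - ext (a + t *\<^sub>R d) q = (?v p - ?v q) + t * (D p - D q)"
      unfolding d_def ext_perturb[OF sD] by (simp add: algebra_simps)
    show "ext (a + t *\<^sub>R d) p - ext (a + t *\<^sub>R d) q \<le> 1"
    proof (cases "?v p - ?v q = 1")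
      case True then show ?thesis using eq tight by simp
    next
      case False
      have s: "\<delta> \<le> 1 - (?v p - ?v q)" using dle[of "(p,q)"] False by (simp add: sl_def)
      have "\<bar>D p - D q\<bar> \<le> 2 * B" using Dle[of p] Dle[of q] by linarith
      then have "\<bar>t\<bar> * \<bar>D p - D q\<bar> \<le> e * (2 * B)" using that epos by (simp add: mult_left_mono)
      then have "t * (D p - D q) \<le> \<delta>" using eb abs_le_D1 by (metis abs_mult)
      then show ?thesis using eq s by linarith
    qed
  qed
  have d0: "d \<noteq> 0"
  proof
    assume "d = 0"
    then have z: "D (Some i) = 0" for i by (metis d_def vec_lambda_beta zero_index)
    then have "D None = 0" using sD sum_option[of D] by simp
    then show False using D0 z by (cases p1) auto
  qed
  have "a - e *\<^sub>R d \<noteq> a + e *\<^sub>R d"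
  proof
    assume h: "a - e *\<^sub>R d = a + e *\<^sub>R d"
    have "(a + e *\<^sub>R d) - (a - e *\<^sub>R d) = (e + e) *\<^sub>R d"
      by (simp only: scaleR_left_distrib) simp
    then have "(e + e) *\<^sub>R d = 0" using h by simp
    then show False using d0 epos by simp
  qed
  then have "midpoint (a - e *\<^sub>R d) (a + e *\<^sub>R d) \<in> open_segment (a - e *\<^sub>R d) (a + e *\<^sub>R d)"
    by simp
  moreover have "midpoint (a - e *\<^sub>R d) (a + e *\<^sub>R d) = a"
    by (simp add: midpoint_def vec_eq_iff algebra_simps)
  moreover have "a - e *\<^sub>R d \<in> voronoi" using inV[of "-e"] epos by simp
  moreover have "a + e *\<^sub>R d \<in> voronoi" using inV[of e] epos by simp
  moreover have "\<forall>x\<in>voronoi. \<forall>y\<in>voronoi. a \<notin> open_segment x y"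
    using ext by (simp add: extreme_point_of_def)
  ultimately show False by auto
qed



lemma card_option_UNIV: "card (UNIV :: ('n::finite) option set) = CARD('n) + 1"
proof -
  have U: "(UNIV :: 'n option set) = insert None (range Some)"
    by (auto intro: option.exhaust)
  show ?thesis unfolding U by (simp add: card_image)
qed

lemma card_Compl': "card (- (A::'a::finite set)) = CARD('a) - card A"
  by (simp add: Compl_eq_Diff_UNIV card_Diff_subset)

lemma extreme_bracket:
  fixes a :: "real^'n"
  assumes ex: "a extreme_point_of voronoi"
  shows "\<exists>k\<in>{1..CARD('n)}. a \<in> bracket k"
proof -
  have aV: "a \<in> voronoi" using ex by (simp add: extreme_point_of_def)
  define v where "v = ext a"
  define M where "M = Max (range v)"
  define m where "m = Min (range v)"
  have "M \<in> range v" unfolding M_def by (rule Max_in) auto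
  then obtain pM where pM: "v pM = M" by auto
  have "m \<in> range v" unfolding m_def by (rule Min_in) auto
  then obtain pm where pm: "v pm = m" by auto
  have Mle: "v p \<le> M" for p unfolding M_def by (rule Max_ge) auto
  have mge: "m \<le> v p" for p unfolding m_def by (rule Min_le) auto
  have Mm: "M - m \<le> 1" using V_imp_P[OF aV, of pM pm] pM pm by (simp add: v_def)
  have claim: "M - m = 1 \<and> (\<forall>p. v p = M \<or> v p = m)"
  proof (rule ccontr)
    assume nc: "\<not> ?thesis"
    show False
    proof (cases "M - m = 1")
      case False
      then have lt: "M - m < 1" using Mm by simp
      define i0 :: 'n where "i0 = undefined"
      define D :: "'n option \<Rightarrow> real" where
        "D = (\<lambda>p. if p = None then 1 else if p = Some i0 then -1 else 0)"
      have sD: "sum D UNIV = 0" by (simp add: sum_option D_def)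
      have D0: "D None \<noteq> 0" by (simp add: D_def)
      have tight: "D p = D q" if "ext a p - ext a q = 1" for p q
        using that Mle[of p] mge[of q] lt by (simp add: v_def)
      show False using perturb[OF aV sD D0 tight] ex by blast
    next
      case True
      then obtain p0 where p0: "v p0 \<noteq> M" "v p0 \<noteq> m" using nc by blast
      define T where "T = {p. v p \<noteq> M \<and> v p \<noteq> m}"
      define D :: "'n option \<Rightarrow> real" where
        "D = (\<lambda>p. if p \<in> T then real (card (- T)) else - real (card T))"
      have sD: "sum D UNIV = 0"
        unfolding D_def sum.If_cases[OF finite[of UNIV]] by simp
      have "pM \<in> - T" using pM by (simp add: T_def)
      then have "card (- T) \<noteq> 0" by auto
      then have D0: "D p0 \<noteq> 0" using p0 by (simp add: D_def T_def)
      have tight: "D p = D q" if "ext a p - ext a q = 1" for p q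
      proof -
        have "v p = M" "v q = m" using that Mle[of p] mge[of q] True by (auto simp: v_def)
        then show ?thesis by (simp add: D_def T_def)
      qed
      show False using perturb[OF aV sD D0 tight] ex by blast
    qed
  qed
  then have M1: "M = m + 1" and two: "\<And>p. v p = M \<or> v p = m" by auto
  define A where "A = {p. v p = M}"
  define s where "s = card A"
  define N where "N = CARD('n) + 1"
  have cardU: "card (UNIV :: 'n option set) = N" by (simp add: card_option_UNIV N_def)
  have "0 = (\<Sum>p\<in>UNIV. v p)" using sum_ext[of a] by (simp add: v_def)
  also have "\<dots> = (\<Sum>p\<in>UNIV. if p \<in> A then M else m)"
    by (rule sum.cong) (use two in \<open>auto simp: A_def\<close>)
  also have "\<dots> = real s * M + real (N - s) * m"
    unfolding sum.If_cases[OF finite[of UNIV]] using cardU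
    by (simp add: s_def card_Compl')
  finally have sumeq: "0 = real s * M + real (N - s) * m" .
  have "A \<noteq> {}" using pM by (auto simp: A_def)
  then have s1: "s \<ge> 1" unfolding s_def by (simp add: Suc_le_eq card_gt_0_iff)
  have "pm \<notin> A" using pm M1 by (simp add: A_def)
  then have "A \<noteq> UNIV" by auto
  then have "card A < card (UNIV :: 'n option set)"
    by (intro psubset_card_mono) auto
  then have "s < N" unfolding s_def using cardU by simp
  then have sN: "real (N - s) = real N - real s" by simp
  have Npos: "real N > 0" by (simp add: N_def)
  have mval: "m = - real s / real N"
    using sumeq M1 sN Npos by (simp add: field_simps algebra_simps)
  have Mval: "M = (real N - real s) / real N"
    using M1 mval Npos by (simp add: field_simps)
  have RN: "real CARD('n) + 1 = real N" by (simp add: N_def)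
  define B where "B = {i. a$i = M}"
  have cardB: "card B = s \<or> card B = s - 1"
  proof (cases "v None = M")
    case True
    have "A = insert None (Some ` B)"
    proof (rule set_eqI)
      fix x show "x \<in> A \<longleftrightarrow> x \<in> insert None (Some ` B)"
        using True by (cases x) (auto simp: A_def B_def v_def)
    qed
    then have "s = card B + 1" by (simp add: s_def card_image)
    then show ?thesis by simp
  next
    case False
    have "A = Some ` B"
    proof (rule set_eqI)
      fix x show "x \<in> A \<longleftrightarrow> x \<in> Some ` B"
        using False by (cases x) (auto simp: A_def B_def v_def)
    qed
    then have "s = card B" by (simp add: s_def card_image)
    then show ?thesis by simp
  qed
  have "a \<in> bracket s"
    unfolding bracket_def RN
  proof (intro CollectI conjI allI)
    fix i
    show "a $ i = - real s / real N \<or> a $ i = (real N - real s) / real N"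
      using two[of "Some i"] mval Mval by (auto simp: v_def)
  next
    have "{i. a $ i = (real N - real s) / real N} = B" by (simp add: B_def Mval)
    then show "card {i. a $ i = (real N - real s) / real N} = s \<or>
               card {i. a $ i = (real N - real s) / real N} = s - 1" using cardB by simp
  qed
  moreover have "s \<in> {1..CARD('n)}" using s1 \<open>s < N\<close> by (simp add: N_def)
  ultimately show ?thesis by blast
qed



lemma two_val_sum:
  fixes a :: "real^'n" and f :: "real \<Rightarrow> real"
  assumes "\<And>i. a$i = x \<or> a$i = y"
  shows "(\<Sum>i\<in>UNIV. f (a$i)) = real (card {i. a$i = y}) * f y + (real CARD('n) - real (card {i. a$i = y})) * f x"
proof -
  have "(\<Sum>i\<in>UNIV. f (a$i)) = (\<Sum>i\<in>UNIV. if i \<in> {i. a$i = y} then f y else f x)"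
  proof (rule sum.cong)
    fix i :: 'n
    show "f (a$i) = (if i \<in> {i. a$i = y} then f y else f x)"
      using assms[of i] by (cases "a$i = y") auto
  qed simp
  also have "\<dots> = real (card {i. a$i = y}) * f y + real (card (- {i. a$i = y})) * f x"
    unfolding sum.If_cases[OF finite[of UNIV]] by simp
  also have "real (card (- {i. a$i = y})) = real CARD('n) - real (card {i. a$i = y})"
    by (simp add: card_Compl' card_mono of_nat_diff)
  finally show ?thesis .
qed

lemma poly1: "c = -(g+1) * Nn \<Longrightarrow> c * (1 + Nn)^2 + (g - c) * Nn^2 + (c * (1+Nn) + (g - c) * Nn)^2 = (-(g+1) * Nn) * (1+Nn)^2 + (g + 1 - (-(g+1) * Nn)) * Nn^2"
  for c g Nn :: real
  by algebra

lemma poly2: "c = -(g+1) * Nn - 1 \<Longrightarrow> c * (1 + Nn)^2 + (g - c) * Nn^2 + (c * (1+Nn) + (g - c) * Nn)^2 = (-(g+1) * Nn) * (1+Nn)^2 + (g + 1 - (-(g+1) * Nn)) * Nn^2"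
  for c g Nn :: real
  by algebra

lemma bracket_qform:
  fixes a :: "real^'n"
  assumes "a \<in> bracket k" "1 \<le> k" "k \<le> CARD('n)"
  shows "qform a = real k * ((real CARD('n) + 1 - real k) / (real CARD('n) + 1))^2
                 + (real CARD('n) + 1 - real k) * (real k / (real CARD('n) + 1))^2"
proof -
  define g where "g = real CARD('n)"
  define P where "P = (g + 1 - real k) / (g + 1)"
  define Nn where "Nn = - real k / (g + 1)"
  have two: "\<And>i. a$i = Nn \<or> a$i = P" and cc: "card {i. a$i = P} = k \<or> card {i. a$i = P} = k - 1"
    using assms(1) unfolding bracket_def P_def Nn_def g_def by auto
  define c where "c = real (card {i. a$i = P})"
  have s2: "(\<Sum>i\<in>UNIV. (a$i)^2) = c * P^2 + (g - c) * Nn^2"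
    using two_val_sum[of a Nn P "\<lambda>x. x^2", OF two] by (simp add: c_def g_def)
  have s1: "(\<Sum>i\<in>UNIV. a$i) = c * P + (g - c) * Nn"
    using two_val_sum[of a Nn P "\<lambda>x. x", OF two] by (simp add: c_def g_def)
  have g1: "g + 1 > 0" by (simp add: g_def)
  have ck: "c = real k \<or> c = real k - 1" using cc assms(2) by (auto simp: c_def of_nat_diff)
  have "qform a = c * P^2 + (g - c) * Nn^2 + (c * P + (g - c) * Nn)^2"
    by (simp add: qform_expand s1 s2)
  also have "\<dots> = real k * P^2 + (g + 1 - real k) * Nn^2"
  proof -
    have Pn: "P = 1 + Nn" using g1 unfolding P_def Nn_def by (simp add: field_simps)
    have kn: "real k = -(g+1) * Nn" using g1 unfolding Nn_def by (simp add: field_simps)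
    have ck': "c = -(g+1)*Nn \<or> c = -(g+1)*Nn - 1" using ck kn by simp
    show ?thesis unfolding Pn kn using ck' poly1 poly2 by blast
  qed
  also have "Nn^2 = (real k / (g + 1))^2" unfolding Nn_def by (simp add: power2_eq_square)
  finally show ?thesis unfolding P_def g_def .
qed



theorem proposition3p2:
  fixes a a' :: "real^'n"
  assumes "a extreme_point_of (voronoi :: (real^'n) set)"
    and "a' extreme_point_of (voronoi :: (real^'n) set)"
  shows "vsim a a' \<longleftrightarrow> (\<exists>k\<in>{1..CARD('n)}. a \<in> bracket k \<and> a' \<in> bracket k)"
proof
  assume "vsim a a'"
  then obtain c0 where c0: "c0 \<in> Dset a" "a' = a - c0" by (auto simp: vsim_def)
  obtain k where k: "k \<in> {1..CARD('n)}" "a \<in> bracket k" using extreme_bracket[OF assms(1)] by blast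
  obtain k' where k': "k' \<in> {1..CARD('n)}" "a' \<in> bracket k'" using extreme_bracket[OF assms(2)] by blast
  define i :: 'n where "i = undefined"
  define N where "N = real CARD('n) + 1"
  have Npos: "N > 0" by (simp add: N_def)
  have ci: "c0 $ i \<in> \<int>" using c0(1) by (simp add: Dset_def int_vec_def)
  have ai: "a$i = - real k / N \<or> a$i = - real k / N + 1"
    using k(2) Npos unfolding bracket_def N_def[symmetric] by (auto simp: field_simps)
  have ai': "a'$i = - real k' / N \<or> a'$i = - real k' / N + 1"
    using k'(2) Npos unfolding bracket_def N_def[symmetric] by (auto simp: field_simps)
  have diff: "a$i - a'$i = c0$i" using c0(2) by simp
  have "(real k' - real k) / N \<in> \<int>"
  proof -
    have "(real k' - real k) / N = c0$i + (a'$i + real k' / N) - (a$i + real k / N)"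
      using diff by (simp add: diff_divide_distrib)
    moreover have "a'$i + real k' / N \<in> \<int>" using ai' by auto
    moreover have "a$i + real k / N \<in> \<int>" using ai by auto
    ultimately show ?thesis using ci by simp
  qed
  moreover have "\<bar>(real k' - real k) / N\<bar> < 1"
    using k(1) k'(1) Npos by (auto simp: N_def abs_less_iff field_simps)
  ultimately have "(real k' - real k) / N = 0" by (rule Ints_nonzero_abs_less1)
  then have "k = k'" using Npos by simp
  then show "\<exists>k\<in>{1..CARD('n)}. a \<in> bracket k \<and> a' \<in> bracket k" using k k' by blast
next
  assume "\<exists>k\<in>{1..CARD('n)}. a \<in> bracket k \<and> a' \<in> bracket k"
  then obtain k where k: "1 \<le> k" "k \<le> CARD('n)" "a \<in> bracket k" "a' \<in> bracket k" by auto
  define N where "N = real CARD('n) + 1"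
  have Npos: "N > 0" by (simp add: N_def)
  have ai: "a$j = - real k / N \<or> a$j = - real k / N + 1" for j
    using k(3) Npos unfolding bracket_def N_def[symmetric] by (auto simp: field_simps)
  have ai': "a'$j = - real k / N \<or> a'$j = - real k / N + 1" for j
    using k(4) Npos unfolding bracket_def N_def[symmetric] by (auto simp: field_simps)
  have iv: "int_vec (a - a')"
    unfolding int_vec_def
  proof
    fix j
    show "(a - a') $ j \<in> \<int>" using ai[of j] ai'[of j] by auto
  qed
  have "qform a = qform a'" using bracket_qform[OF k(3) k(1) k(2)] bracket_qform[OF k(4) k(1) k(2)] by simp
  then have "a - a' \<in> Dset a" using iv by (simp add: Dset_def)
  moreover have "a' = a - (a - a')" by simp
  ultimately show "vsim a a'" unfolding vsim_def by blast
qed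

end
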